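(* (1) Let $(A,\cdot,[-,-])$ be a transposed Poisson algebra and $\mathcal{B}$ a nondegenerate skew-symmetric bilinear form on $A$ that is a Connes cocycle on $(A,\cdot)$ and a symplectic form on $(A,[-,-])$. Define $\star,\circ$ by $\mathcal{B}(x\star y,z)=\mathcal{B}(y,x\cdot z)$ and $\mathcal{B}(x\circ y,z)=-\mathcal{B}(y,[x,z])$. Then $(A,\star,\circ)$ is a TZPD algebra with $x\star y+y\star x=x\cdot y$ and $x\circ y-y\circ x=[x,y]$. (2) Conversely, let $(A,\star,\circ)$ be a TZPD algebra, $x\cdot y=x\star y+y\star x$, $[x,y]=x\circ y-y\circ x$. Then $A\ltimes_{-\mathcal{L}^*_{\star},\mathcal{L}^*_{\circ}}A^*$ is a transposed Poisson algebra, and $\mathcal{B}_p$ is a Connes cocycle on its commutative associative product and a symplectic form on its Lie bracket.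
   Context: Finite-dimensional spaces, characteristic zero. $\mathcal{L}_\ast(x)y=x\ast y$; $\langle\rho^*(x)v^*,u\rangle=-\langle v^*,\rho(x)u\rangle$. For $(A,\cdot,[-,-])$ and linear $\mu,\rho:A\to\mathrm{End}(V)$, $A\ltimes_{\mu,\rho}V$ is $A\oplus V$ with $(x,u)\cdot(y,v)=(x\cdot y,\mu(x)v+\mu(y)u)$, $[(x,u),(y,v)]=([x,y],\rho(x)v-\rho(y)u)$. $\mathcal{B}_p((x,a^* ),(y,b^* ))=\langle x,b^*\rangle-\langle a^*,y\rangle$. Connes cocycle on $(A,\cdot)$: skew-symmetric $\mathcal{B}$ with $\mathcal{B}(x\cdot y,z)+\mathcal{B}(y\cdot z,x)+\mathcal{B}(z\cdot x,y)=0$; symplectic form on a Lie algebra: nondegenerate skew-symmetric $\mathcal{B}$ with $\mathcal{B}([x,y],z)+\mathcal{B}([y,z],x)+\mathcal{B}([z,x],y)=0$. Transposed Poisson algebra: $(A,\cdot)$ commutative associative, $(A,[-,-])$ Lie, $2z\cdot[x,y]=[z\cdot x,y]+[x,z\cdot y]$. Zinbiel: $x\star(y\star z)=(x\star y)\star z+(y\star x)\star z$. Pre-Lie: $(x\circ y)\circ z-x\circ(y\circ z)=(y\circ x)\circ z-y\circ(x\circ z)$. A TZPD algebra is $(A,\star,\circ)$ with $(A,\star)$ Zinbiel, $(A,\circ)$ pre-Lie, and for all $x,y,z$: $2y\circ(x\star z)=(x\star y+y\star x)\circ z+x\star(y\circ z)$; $2(x\circ y-y\circ x)\star z=x\star(y\circ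 z)-y\star(x\circ z)$; $y\circ(x\star z+z\star x)-x\circ(y\star z+z\star y)+z\star(x\circ y-y\circ x)=0$. *)

theory Defs
  imports Main "HOL-Library.Function_Algebras" "HOL-Library.Product_Plus"
begin

definition lin_map :: "('k \<Rightarrow> 'v \<Rightarrow> 'v) \<Rightarrow> ('k \<Rightarrow> 'w \<Rightarrow> 'w) \<Rightarrow> ('v::ab_group_add \<Rightarrow> 'w::ab_group_add) \<Rightarrow> bool" where
  "lin_map sv sw f \<longleftrightarrow> (\<forall>x y. f (x + y) = f x + f y) \<and> (\<forall>c x. f (sv c x) = sw c (f x))"

definition bilin_op :: "('k \<Rightarrow> 'v \<Rightarrow> 'v) \<Rightarrow> ('v::ab_group_add \<Rightarrow> 'v \<Rightarrow> 'v) \<Rightarrow> bool" where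
  "bilin_op sv m \<longleftrightarrow> (\<forall>x. lin_map sv sv (m x)) \<and> (\<forall>y. lin_map sv sv (\<lambda>x. m x y))"

definition bilin_form :: "('k::field \<Rightarrow> 'v \<Rightarrow> 'v) \<Rightarrow> ('v::ab_group_add \<Rightarrow> 'v \<Rightarrow> 'k) \<Rightarrow> bool" where
  "bilin_form sv B \<longleftrightarrow> (\<forall>x. lin_map sv (*) (B x)) \<and> (\<forall>y. lin_map sv (*) (\<lambda>x. B x y))"

definition skew_form :: "('v \<Rightarrow> 'v \<Rightarrow> 'k::field) \<Rightarrow> bool" where
  "skew_form B \<longleftrightarrow> (\<forall>x y. B x y = - B y x)"

definition nondeg_form :: "('v::zero \<Rightarrow> 'v \<Rightarrow> 'k::field) \<Rightarrow> bool" where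
  "nondeg_form B \<longleftrightarrow> (\<forall>x. (\<forall>y. B x y = 0) \<longrightarrow> x = 0)"

definition comm_assoc_alg :: "('k \<Rightarrow> 'v \<Rightarrow> 'v) \<Rightarrow> ('v::ab_group_add \<Rightarrow> 'v \<Rightarrow> 'v) \<Rightarrow> bool" where
  "comm_assoc_alg sv m \<longleftrightarrow> bilin_op sv m \<and> (\<forall>x y. m x y = m y x)
     \<and> (\<forall>x y z. m (m x y) z = m x (m y z))"

definition lie_alg :: "('k \<Rightarrow> 'v \<Rightarrow> 'v) \<Rightarrow> ('v::ab_group_add \<Rightarrow> 'v \<Rightarrow> 'v) \<Rightarrow> bool" where
  "lie_alg sv br \<longleftrightarrow> bilin_op sv br \<and> (\<forall>x. br x x = 0)
     \<and> (\<forall>x y z. br x (br y z) + br y (br z x) + br z (br x y) = 0)"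

definition transposed_poisson :: "('k \<Rightarrow> 'v \<Rightarrow> 'v) \<Rightarrow> ('v::ab_group_add \<Rightarrow> 'v \<Rightarrow> 'v) \<Rightarrow> ('v \<Rightarrow> 'v \<Rightarrow> 'v) \<Rightarrow> bool" where
  "transposed_poisson sv m br \<longleftrightarrow> comm_assoc_alg sv m \<and> lie_alg sv br
     \<and> (\<forall>x y z. m z (br x y) + m z (br x y) = br (m z x) y + br x (m z y))"

definition zinbiel :: "('k \<Rightarrow> 'v \<Rightarrow> 'v) \<Rightarrow> ('v::ab_group_add \<Rightarrow> 'v \<Rightarrow> 'v) \<Rightarrow> bool" where
  "zinbiel sv st \<longleftrightarrow> bilin_op sv st
     \<and> (\<forall>x y z. st x (st y z) = st (st x y) z + st (st y x) z)"

definition pre_lie :: "('k \<Rightarrow> 'v \<Rightarrow> 'v) \<Rightarrow> ('v::ab_group_add \<Rightarrow> 'v \<Rightarrow> 'v) \<Rightarrow> bool" where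
  "pre_lie sv ci \<longleftrightarrow> bilin_op sv ci
     \<and> (\<forall>x y z. ci (ci x y) z - ci x (ci y z) = ci (ci y x) z - ci y (ci x z))"

definition TZPD :: "('k \<Rightarrow> 'v \<Rightarrow> 'v) \<Rightarrow> ('v::ab_group_add \<Rightarrow> 'v \<Rightarrow> 'v) \<Rightarrow> ('v \<Rightarrow> 'v \<Rightarrow> 'v) \<Rightarrow> bool" where
  "TZPD sv st ci \<longleftrightarrow> zinbiel sv st \<and> pre_lie sv ci
     \<and> (\<forall>x y z. ci y (st x z) + ci y (st x z) = ci (st x y + st y x) z + st x (ci y z))
     \<and> (\<forall>x y z. st (ci x y - ci y x) z + st (ci x y - ci y x) z = st x (ci y z) - st y (ci x z))
     \<and> (\<forall>x y z. ci y (st x z + st z x) - ci x (st y z + st z y) + st z (ci x y - ci y x) = 0)"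

definition connes_cocycle :: "('k::field \<Rightarrow> 'v \<Rightarrow> 'v) \<Rightarrow> ('v::ab_group_add \<Rightarrow> 'v \<Rightarrow> 'v) \<Rightarrow> ('v \<Rightarrow> 'v \<Rightarrow> 'k) \<Rightarrow> bool" where
  "connes_cocycle sv m B \<longleftrightarrow> bilin_form sv B \<and> skew_form B
     \<and> (\<forall>x y z. B (m x y) z + B (m y z) x + B (m z x) y = 0)"

definition symplectic_form :: "('k::field \<Rightarrow> 'v \<Rightarrow> 'v) \<Rightarrow> ('v::ab_group_add \<Rightarrow> 'v \<Rightarrow> 'v) \<Rightarrow> ('v \<Rightarrow> 'v \<Rightarrow> 'k) \<Rightarrow> bool" where
  "symplectic_form sv br B \<longleftrightarrow> bilin_form sv B \<and> nondeg_form B \<and> skew_form B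
     \<and> (\<forall>x y z. B (br x y) z + B (br y z) x + B (br z x) y = 0)"

section \<open>Concrete model: A = 'k^n as functions 'n \<Rightarrow> 'k ('n finite), A* = 'k^n with the
  canonical pairing, and A \<oplus> A* as pairs\<close>

definition vsc :: "'k::field \<Rightarrow> ('n \<Rightarrow> 'k) \<Rightarrow> ('n \<Rightarrow> 'k)" where
  "vsc c x = (\<lambda>i. c * x i)"

definition psc :: "'k::field \<Rightarrow> ('n \<Rightarrow> 'k) \<times> ('n \<Rightarrow> 'k) \<Rightarrow> ('n \<Rightarrow> 'k) \<times> ('n \<Rightarrow> 'k)" where
  "psc c p = (vsc c (fst p), vsc c (snd p))"

definition dpair :: "('n::finite \<Rightarrow> 'k::field) \<Rightarrow> ('n \<Rightarrow> 'k) \<Rightarrow> 'k" where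
  "dpair f x = (\<Sum>i\<in>UNIV. f i * x i)"

definition dual_rep :: "(('n::finite \<Rightarrow> 'k::field) \<Rightarrow> ('n \<Rightarrow> 'k) \<Rightarrow> ('n \<Rightarrow> 'k)) \<Rightarrow> ('n \<Rightarrow> 'k) \<Rightarrow> ('n \<Rightarrow> 'k) \<Rightarrow> ('n \<Rightarrow> 'k)" where
  "dual_rep rho x v = (THE w. \<forall>u. dpair w u = - dpair v (rho x u))"

definition sd_mul :: "('a \<Rightarrow> 'a \<Rightarrow> 'a) \<Rightarrow> ('a \<Rightarrow> 'b \<Rightarrow> 'b::plus) \<Rightarrow> 'a \<times> 'b \<Rightarrow> 'a \<times> 'b \<Rightarrow> 'a \<times> 'b" where
  "sd_mul m mu p q = (m (fst p) (fst q), mu (fst p) (snd q) + mu (fst q) (snd p))"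

definition sd_br :: "('a \<Rightarrow> 'a \<Rightarrow> 'a) \<Rightarrow> ('a \<Rightarrow> 'b \<Rightarrow> 'b::minus) \<Rightarrow> 'a \<times> 'b \<Rightarrow> 'a \<times> 'b \<Rightarrow> 'a \<times> 'b" where
  "sd_br br rho p q = (br (fst p) (fst q), rho (fst p) (snd q) - rho (fst q) (snd p))"

definition Bp :: "('n::finite \<Rightarrow> 'k::field) \<times> ('n \<Rightarrow> 'k) \<Rightarrow> ('n \<Rightarrow> 'k) \<times> ('n \<Rightarrow> 'k) \<Rightarrow> 'k" where
  "Bp p q = dpair (snd q) (fst p) - dpair (snd p) (fst q)"

end

theory Submission
  imports Defs "HOL.Vector_Spaces"
begin


lemma sum_fun_app: "(sum f A) i = (\<Sum>a\<in>A. f a i)"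
  by (induction A rule: infinite_finite_induct) auto

lemma lm_add: "lin_map sv sw f \<Longrightarrow> f (x + y) = f x + f y" by (simp add: lin_map_def)
lemma lm_sc: "lin_map sv sw f \<Longrightarrow> f (sv c x) = sw c (f x)" by (simp add: lin_map_def)
lemma lm_zero: "lin_map sv sw f \<Longrightarrow> f 0 = 0"
  by (metis add_cancel_right_right add_0 lm_add)
lemma lm_minus: "lin_map sv sw f \<Longrightarrow> f (- x) = - f x"
  by (metis add.right_inverse add_eq_0_iff lm_add lm_zero)
lemma lm_diff: "lin_map sv sw f \<Longrightarrow> f (x - y) = f x - f y"
  by (metis diff_conv_add_uminus lm_add lm_minus)
lemma lm_sum: "lin_map sv sw f \<Longrightarrow> f (sum g A) = (\<Sum>a\<in>A. f (g a))"
  by (induction A rule: infinite_finite_induct) (auto simp: lm_zero lm_add)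

definition ev :: "'n \<Rightarrow> 'n \<Rightarrow> 'k::field" where "ev j = (\<lambda>i. if i = j then 1 else 0)"

lemma vs_vsc: "vector_space (vsc :: 'k::field \<Rightarrow> ('n \<Rightarrow> 'k) \<Rightarrow> _)"
  by unfold_locales (auto simp: vsc_def fun_eq_iff algebra_simps)

lemma decomp: "(x::'n::finite \<Rightarrow> 'k::field) = (\<Sum>j\<in>UNIV. vsc (x j) (ev j))"
proof -
  have "\<And>i. (\<Sum>j\<in>UNIV. x j * (if i = j then 1 else 0)) = x i"
    by (simp add: if_distrib cong: if_cong)
  then show ?thesis by (auto simp: fun_eq_iff vsc_def ev_def sum_fun_app)
qed

lemma fd_vsc: "finite_dimensional_vector_space (vsc :: 'k::field \<Rightarrow> ('n::finite \<Rightarrow> 'k) \<Rightarrow> _) (range ev)"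
proof -
  interpret vector_space "vsc :: 'k::field \<Rightarrow> ('n::finite \<Rightarrow> 'k) \<Rightarrow> _" by (rule vs_vsc)
  show ?thesis
  proof
    show "finite (range ev :: ('n \<Rightarrow> 'k) set)" by simp
    show "span (range ev :: ('n \<Rightarrow> 'k) set) = UNIV"
    proof (rule set_eqI, simp)
      fix x :: "'n \<Rightarrow> 'k"
      have "(\<Sum>j\<in>UNIV. vsc (x j) (ev j)) \<in> span (range ev)"
        by (intro span_sum span_scale span_base) auto
      then show "x \<in> span (range ev)" using decomp[of x] by simp
    qed
    show "independent (range ev :: ('n \<Rightarrow> 'k) set)"
    proof
      assume "dependent (range ev :: ('n \<Rightarrow> 'k) set)"
      then obtain u where u: "\<exists>v\<in>range ev. u v \<noteq> 0" "(\<Sum>v\<in>range ev. vsc (u v) v) = (0::'n\<Rightarrow>'k)"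
        by (auto simp: dependent_finite)
      have inj: "inj (ev :: 'n \<Rightarrow> 'n \<Rightarrow> 'k)" by (auto simp: inj_def ev_def fun_eq_iff)
      have "(\<Sum>j\<in>UNIV. vsc (u (ev j)) (ev j)) = (0::'n\<Rightarrow>'k)"
        using u(2) by (simp add: sum.reindex[OF inj])
      then have "\<And>i. (\<Sum>j\<in>UNIV. u (ev j) * (if i = j then 1 else 0)) = (0::'k)"
        by (auto simp: fun_eq_iff vsc_def ev_def sum_fun_app)
      then have "\<And>i. u (ev i) = (0::'k)"
        by (simp add: if_distrib cong: if_cong)
      then show False using u(1) by auto
    qed
  qed
qed

lemma riesz:
  fixes B :: "('n::finite \<Rightarrow> 'k::field) \<Rightarrow> ('n \<Rightarrow> 'k) \<Rightarrow> 'k"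
  assumes bf: "bilin_form vsc B" and nd: "nondeg_form B" and f: "lin_map vsc (*) f"
  shows "\<exists>v. \<forall>z. B v z = f z"
proof -
  interpret finite_dimensional_vector_space "vsc :: 'k::field \<Rightarrow> ('n::finite \<Rightarrow> 'k) \<Rightarrow> _" "range ev"
    by (rule fd_vsc)
  define T where "T v = (\<lambda>j. B v (ev j))" for v
  have BL: "lin_map vsc (*) (\<lambda>x. B x y)" for y using bf by (simp add: bilin_form_def)
  have BR: "lin_map vsc (*) (B x)" for x using bf by (simp add: bilin_form_def)
  have BRexp: "B v z = (\<Sum>j\<in>UNIV. z j * B v (ev j))" for v z
    by (subst decomp[of z]) (simp add: lm_sum[OF BR] lm_sc[OF BR])
  have lin: "Vector_Spaces.linear vsc vsc T"
    by unfold_locales (auto simp: T_def fun_eq_iff lm_add[OF BL] lm_sc[OF BL, unfolded vsc_def] vsc_def)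
  have "inj T"
  proof (rule injI)
    fix x y assume "T x = T y"
    then have "\<forall>j. B (x - y) (ev j) = 0" by (simp add: T_def fun_eq_iff lm_diff[OF BL])
    then have "\<forall>z. B (x - y) z = 0" by (subst BRexp) simp
    then show "x = y" using nd unfolding nondeg_form_def by (metis eq_iff_diff_eq_0)
  qed
  then have "surj T" using linear_inj_imp_surj[OF lin] by blast
  then obtain v where "T v = (\<lambda>j. f (ev j))" by (metis surjD)
  then have "\<forall>j. B v (ev j) = f (ev j)" by (simp add: T_def fun_eq_iff)
  then have "B v z = f z" for z
    by (subst BRexp, subst decomp[of z]) (simp add: lm_sum[OF f] lm_sc[OF f])
  then show ?thesis by blast
qed

lemma boL: "bilin_op sv m \<Longrightarrow> lin_map sv sv (\<lambda>x. m x y)" by (simp add: bilin_op_def)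
lemma boR: "bilin_op sv m \<Longrightarrow> lin_map sv sv (m x)" by (simp add: bilin_op_def)
lemma bfL: "bilin_form sv B \<Longrightarrow> lin_map sv (*) (\<lambda>x. B x y)" by (simp add: bilin_form_def)
lemma bfR: "bilin_form sv B \<Longrightarrow> lin_map sv (*) (B x)" by (simp add: bilin_form_def)

lemma bo_simps:
  assumes "bilin_op sv m"
  shows "m (x + y) z = m x z + m y z" "m (x - y) z = m x z - m y z" "m (- x) z = - m x z"
    "m 0 z = 0" "m z (x + y) = m z x + m z y" "m z (x - y) = m z x - m z y"
    "m z (- x) = - m z x" "m z 0 = 0"
  using lm_add[OF boL[OF assms]] lm_diff[OF boL[OF assms]] lm_minus[OF boL[OF assms]]
    lm_zero[OF boL[OF assms]] lm_add[OF boR[OF assms]] lm_diff[OF boR[OF assms]]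
    lm_minus[OF boR[OF assms]] lm_zero[OF boR[OF assms]] by auto

lemma bf_simps:
  assumes "bilin_form sv B"
  shows "B (x + y) z = B x z + B y z" "B (x - y) z = B x z - B y z" "B (- x) z = - B x z"
    "B 0 z = 0" "B z (x + y) = B z x + B z y" "B z (x - y) = B z x - B z y"
    "B z (- x) = - B z x" "B z 0 = 0"
  using lm_add[OF bfL[OF assms]] lm_diff[OF bfL[OF assms]] lm_minus[OF bfL[OF assms]]
    lm_zero[OF bfL[OF assms]] lm_add[OF bfR[OF assms]] lm_diff[OF bfR[OF assms]]
    lm_minus[OF bfR[OF assms]] lm_zero[OF bfR[OF assms]] by auto

lemma comb:
  fixes st ci :: "('n \<Rightarrow> 'k::field_char_0) \<Rightarrow> ('n \<Rightarrow> 'k) \<Rightarrow> ('n \<Rightarrow> 'k)"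
  assumes bst: "bilin_op sv st" and bci: "bilin_op sv ci"
  and id1: "\<And>x y z. ci y (st x z) + ci y (st x z) = ci (st x y + st y x) z + st x (ci y z)"
  and id2: "\<And>x y z. st (ci x y - ci y x) z + st (ci x y - ci y x) z = st x (ci y z) - st y (ci x z)"
  shows "(st z (ci x y - ci y x) + st (ci x y - ci y x) z + (st z (ci x y - ci y x) + st (ci x y - ci y x) z)
          = ci (st z x + st x z) y - ci y (st z x + st x z) + (ci x (st z y + st y z) - ci (st z y + st y z) x))
    \<longleftrightarrow> (ci y (st x z + st z x) - ci x (st y z + st z y) + st z (ci x y - ci y x) = 0)"
    (is "?L \<longleftrightarrow> ?R")
proof -
  note s = bo_simps[OF bst] bo_simps[OF bci]
  have b: "\<And>i. (ci y (st x z) + ci y (st x z)) i = (ci (st x y + st y x) z + st x (ci y z)) i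
     \<and> (ci y (st z x) + ci y (st z x)) i = (ci (st z y + st y z) x + st z (ci y x)) i
     \<and> (ci x (st y z) + ci x (st y z)) i = (ci (st y x + st x y) z + st y (ci x z)) i
     \<and> (ci x (st z y) + ci x (st z y)) i = (ci (st z x + st x z) y + st z (ci x y)) i
     \<and> (st (ci x y - ci y x) z + st (ci x y - ci y x) z) i = (st x (ci y z) - st y (ci x z)) i"
    using id1 id2 by metis
  show ?thesis
  proof
    assume L: ?L
    have "\<And>i. (ci y (st x z + st z x) - ci x (st y z + st z y) + st z (ci x y - ci y x)) i = 0 i"
    proof -
      fix i
      have c: "(st z (ci x y - ci y x) + st (ci x y - ci y x) z + (st z (ci x y - ci y x) + st (ci x y - ci y x) z)) i
          = (ci (st z x + st x z) y - ci y (st z x + st x z) + (ci x (st z y + st y z) - ci (st z y + st y z) x)) i"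
        using L by simp
      show "?thesis i" using b[of i] c by (simp add: s) algebra
    qed
    then show ?R by (simp add: fun_eq_iff)
  next
    assume R: ?R
    have "\<And>i. (st z (ci x y - ci y x) + st (ci x y - ci y x) z + (st z (ci x y - ci y x) + st (ci x y - ci y x) z)) i
          = (ci (st z x + st x z) y - ci y (st z x + st x z) + (ci x (st z y + st y z) - ci (st z y + st y z) x)) i"
    proof -
      fix i
      have c: "(ci y (st x z + st z x) - ci x (st y z + st z y) + st z (ci x y - ci y x)) i = 0 i"
        using R by simp
      show "?thesis i" using b[of i] c by (simp add: s) algebra
    qed
    then show ?L by (simp add: fun_eq_iff)
  qed
qed


lemma ab1: "(a::'a::ab_group_add) + - b + - c = 0 \<Longrightarrow> c = a - b"
  by (simp add: algebra_simps)
lemma ab2: "(a::'a::ab_group_add) - b = c - d \<Longrightarrow> a - c = b - d"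
proof -
  assume h: "a - b = c - d"
  have "a - c = (a - b) + b - c" by simp
  also have "... = (c - d) + b - c" by (simp only: h)
  also have "... = b - d" by (simp add: algebra_simps)
  finally show ?thesis .
qed

lemma lm_comp: "lin_map s1 s2 f \<Longrightarrow> lin_map s2 s3 g \<Longrightarrow> lin_map s1 s3 (\<lambda>x. g (f x))"
  by (simp add: lin_map_def)

context
  fixes m br :: "('n::finite \<Rightarrow> 'k::field_char_0) \<Rightarrow> ('n \<Rightarrow> 'k) \<Rightarrow> ('n \<Rightarrow> 'k)"
    and B :: "('n \<Rightarrow> 'k) \<Rightarrow> ('n \<Rightarrow> 'k) \<Rightarrow> 'k"
  assumes tp: "transposed_poisson vsc m br" and bf: "bilin_form vsc B" and sk: "skew_form B"
    and nd: "nondeg_form B" and cc: "connes_cocycle vsc m B" and sy: "symplectic_form vsc br B"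
begin

lemma mb: "bilin_op vsc m" using tp unfolding transposed_poisson_def comm_assoc_alg_def by blast
lemma mcomm: "m x y = m y x" using tp unfolding transposed_poisson_def comm_assoc_alg_def by blast
lemma massoc: "m (m x y) z = m x (m y z)" using tp unfolding transposed_poisson_def comm_assoc_alg_def by blast
lemma bb: "bilin_op vsc br" using tp unfolding transposed_poisson_def lie_alg_def by blast
lemma balt: "br x x = 0" using tp unfolding transposed_poisson_def lie_alg_def by blast
lemma bjac: "br x (br y z) + br y (br z x) + br z (br x y) = 0"
  using tp unfolding transposed_poisson_def lie_alg_def by blast
lemma tpid: "m z (br x y) + m z (br x y) = br (m z x) y + br x (m z y)"
  using tp unfolding transposed_poisson_def by blast
lemma banti: "br y x = - br x y"
proof -
  have "br (x + y) (x + y) = 0" by (rule balt)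
  then have "br x y + br y x = 0" using balt[of x] balt[of y] by (simp add: bo_simps[OF bb] add.commute)
  then show ?thesis by (simp add: eq_neg_iff_add_eq_0 add.commute)
qed
lemma skw: "B x y = - B y x" using sk unfolding skew_form_def by blast
lemma cocyc: "B (m x y) z + B (m y z) x + B (m z x) y = 0" using cc unfolding connes_cocycle_def by blast
lemma sympl: "B (br x y) z + B (br y z) x + B (br z x) y = 0" using sy unfolding symplectic_form_def by blast
lemma Beq: "(\<And>w. B u w = B v w) \<Longrightarrow> u = v"
proof -
  assume "\<And>w. B u w = B v w"
  then have "\<forall>w. B (u - v) w = 0" by (simp add: bf_simps[OF bf])
  then show "u = v" using nd unfolding nondeg_form_def by (metis eq_iff_diff_eq_0)
qed

lemmas Bs = bf_simps[OF bf]

lemma exist_ops: "\<exists>st ci. (\<forall>x y z. B (st x y) z = B y (m x z)) \<and> (\<forall>x y z. B (ci x y) z = - B y (br x z))"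
proof -
  have l1: "\<exists>v. \<forall>z. B v z = B y (m x z)" for x y
    by (rule riesz[OF bf nd lm_comp[OF boR[OF mb] bfR[OF bf]]])
  have l2: "\<exists>v. \<forall>z. B v z = - B y (br x z)" for x y
  proof (rule riesz[OF bf nd])
    have "lin_map vsc (*) (\<lambda>z. B y (br x z))" by (rule lm_comp[OF boR[OF bb] bfR[OF bf]])
    then show "lin_map vsc (*) (\<lambda>z. - B y (br x z))" by (simp add: lin_map_def)
  qed
  define st where "st x y = (SOME v. \<forall>z. B v z = B y (m x z))" for x y
  define ci where "ci x y = (SOME v. \<forall>z. B v z = - B y (br x z))" for x y
  have "\<forall>x y z. B (st x y) z = B y (m x z)"
    unfolding st_def using someI_ex[OF l1] by blast
  moreover have "\<forall>x y z. B (ci x y) z = - B y (br x z)"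
    unfolding ci_def using someI_ex[OF l2] by blast
  ultimately show ?thesis by blast
qed

context
  fixes st ci
  assumes hst: "\<And>x y z. B (st x y) z = B y (m x z)"
  and hci: "\<And>x y z. B (ci x y) z = - B y (br x z)"
begin


lemma sum_st: "st x y + st y x = m x y"
proof (rule Beq)
  fix w
  have e1: "B (m y w) x = - B x (m y w)" by (rule skw)
  have e2: "B (m w x) y = - B y (m x w)" using skw[of "m w x" y] mcomm[of w x] by simp
  have "B (m x y) w = - B (m y w) x - B (m w x) y" using cocyc[of x y w] by algebra
  then show "B (st x y + st y x) w = B (m x y) w"
    by (simp add: Bs hst e1 e2)
qed

lemma diff_ci: "ci x y - ci y x = br x y"
proof (rule Beq)
  fix w
  have e1: "B (br y w) x = - B x (br y w)" by (rule skw)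
  have e2: "B (br w x) y = B y (br x w)" using skw[of "br w x" y] banti[of w x] Bs(7) by simp
  have "B (br x y) w = - B (br y w) x - B (br w x) y" using sympl[of x y w] by algebra
  then show "B (ci x y - ci y x) w = B (br x y) w"
    by (simp add: Bs hci e1 e2)
qed

lemma bst: "bilin_op vsc st"
  unfolding bilin_op_def lin_map_def
proof (intro conjI allI)
  fix x y z c
  show "st x (y + z) = st x y + st x z" by (rule Beq) (simp add: Bs hst)
  show "st x (vsc c y) = vsc c (st x y)" by (rule Beq) (simp add: Bs hst lm_sc[OF bfL[OF bf]])
  show "st (x + z) y = st x y + st z y" by (rule Beq) (simp add: Bs hst bo_simps[OF mb])
  show "st (vsc c x) y = vsc c (st x y)"
    by (rule Beq) (simp add: Bs hst lm_sc[OF bfL[OF bf]] lm_sc[OF bfR[OF bf]] lm_sc[OF boL[OF mb]])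
qed

lemma bci: "bilin_op vsc ci"
  unfolding bilin_op_def lin_map_def
proof (intro conjI allI)
  fix x y z c
  show "ci x (y + z) = ci x y + ci x z" by (rule Beq) (simp add: Bs hci)
  show "ci x (vsc c y) = vsc c (ci x y)" by (rule Beq) (simp add: Bs hci lm_sc[OF bfL[OF bf]])
  show "ci (x + z) y = ci x y + ci z y" by (rule Beq) (simp add: Bs hci bo_simps[OF bb])
  show "ci (vsc c x) y = vsc c (ci x y)"
    by (rule Beq) (simp add: Bs hci lm_sc[OF bfL[OF bf]] lm_sc[OF bfR[OF bf]] lm_sc[OF boL[OF bb]])
qed


lemma zin: "st x (st y z) = st (st x y) z + st (st y x) z"
proof -
  have "st (st x y) z + st (st y x) z = st (m x y) z" by (metis bo_simps(1)[OF bst] sum_st)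
  moreover have "st x (st y z) = st (m x y) z"
  proof (rule Beq)
    fix w
    have "m y (m x w) = m (m x y) w" by (metis massoc mcomm)
    then show "B (st x (st y z)) w = B (st (m x y) z) w" by (simp add: hst)
  qed
  ultimately show ?thesis by simp
qed

lemma plie: "ci (ci x y) z - ci x (ci y z) = ci (ci y x) z - ci y (ci x z)"
proof -
  have V: "br (br x y) w = br x (br y w) - br y (br x w)" for w
  proof (rule ab1)
    show "br x (br y w) + - br y (br x w) + - br (br x y) w = 0"
      using bjac[of x y w] banti[of w x] banti[of w "br x y"] by (simp add: bo_simps[OF bb])
  qed
  have h: "ci (br x y) z = ci x (ci y z) - ci y (ci x z)"
  proof (rule Beq)
    fix w
    have "B z (br (br x y) w) = B z (br x (br y w)) - B z (br y (br x w))" by (simp add: V Bs)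
    then show "B (ci (br x y) z) w = B (ci x (ci y z) - ci y (ci x z)) w"
      by (simp add: Bs hci)
  qed
  have "ci (ci x y) z - ci (ci y x) z = ci x (ci y z) - ci y (ci x z)"
    using h diff_ci[of x y] bo_simps(2)[OF bci] by metis
  then show ?thesis by (rule ab2)
qed

lemma id1: "ci y (st x z) + ci y (st x z) = ci (st x y + st y x) z + st x (ci y z)"
  unfolding sum_st
proof (rule Beq)
  fix w
  have "B z (m x (br y w) + m x (br y w)) = B z (br (m x y) w + br y (m x w))" by (simp only: tpid)
  then have "B z (m x (br y w)) + B z (m x (br y w)) = B z (br (m x y) w) + B z (br y (m x w))"
    by (simp only: Bs)
  moreover have "B (ci y (st x z) + ci y (st x z)) w = B (ci y (st x z)) w + B (ci y (st x z)) w"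
    by (simp only: Bs)
  ultimately show "B (ci y (st x z) + ci y (st x z)) w = B (ci (m x y) z + st x (ci y z)) w"
    by (simp add: Bs hci hst)
qed

lemma id2: "st (ci x y - ci y x) z + st (ci x y - ci y x) z = st x (ci y z) - st y (ci x z)"
  unfolding diff_ci
proof (rule Beq)
  fix w
  have "B z (m w (br x y) + m w (br x y)) = B z (br (m w x) y + br x (m w y))" by (simp only: tpid)
  moreover have "m w (br x y) = m (br x y) w" "m w y = m y w" by (rule mcomm)+
  moreover have "br (m w x) y = - br y (m x w)" by (metis banti mcomm)
  ultimately have "B z (m (br x y) w) + B z (m (br x y) w) = - B z (br y (m x w)) + B z (br x (m y w))"
    by (simp only: Bs)
  moreover have "B (st (br x y) z + st (br x y) z) w = B (st (br x y) z) w + B (st (br x y) z) w"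
    by (simp only: Bs)
  ultimately show "B (st (br x y) z + st (br x y) z) w = B (st x (ci y z) - st y (ci x z)) w"
    by (simp add: Bs hci hst)
qed

lemma mdef: "m = (\<lambda>a b. st a b + st b a)" by (intro ext) (simp add: sum_st)
lemma brdef: "br = (\<lambda>a b. ci a b - ci b a)" by (intro ext) (simp add: diff_ci)

lemma id3: "ci y (st x z + st z x) - ci x (st y z + st z y) + st z (ci x y - ci y x) = 0"
  using comb[OF bst bci id1 id2] tpid[of z x y, unfolded mdef brdef] by blast

lemma tzpd: "TZPD vsc st ci"
  unfolding TZPD_def zinbiel_def pre_lie_def
  using bst bci zin plie id1 id2 id3 by blast

end

lemma part1: "(\<exists>st ci. (\<forall>x y z. B (st x y) z = B y (m x z)) \<and> (\<forall>x y z. B (ci x y) z = - B y (br x z)))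
        \<and> (\<forall>st ci. (\<forall>x y z. B (st x y) z = B y (m x z)) \<and> (\<forall>x y z. B (ci x y) z = - B y (br x z))
             \<longrightarrow> TZPD vsc st ci \<and> (\<forall>x y. st x y + st y x = m x y) \<and> (\<forall>x y. ci x y - ci y x = br x y))"
proof (intro conjI allI impI)
  show "\<exists>st ci. (\<forall>x y z. B (st x y) z = B y (m x z)) \<and> (\<forall>x y z. B (ci x y) z = - B y (br x z))"
    by (rule exist_ops)
  fix st ci
  assume h: "(\<forall>x y z. B (st x y) z = B y (m x z)) \<and> (\<forall>x y z. B (ci x y) z = - B y (br x z))"
  then have h1: "\<And>x y z. B (st x y) z = B y (m x z)" and h2: "\<And>x y z. B (ci x y) z = - B y (br x z)"
    by blast+
  show "TZPD vsc st ci" by (rule tzpd[OF h1 h2])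
  show "st x y + st y x = m x y" for x y using sum_st[OF h1 h2] by blast
  show "ci x y - ci y x = br x y" for x y using diff_ci[OF h1 h2] by blast
qed

end



lemma dp_simps:
  fixes f g x y :: "'n::finite \<Rightarrow> 'k::field"
  shows "dpair (f + g) x = dpair f x + dpair g x" "dpair (f - g) x = dpair f x - dpair g x"
    "dpair (- f) x = - dpair f x" "dpair 0 x = 0" "dpair (vsc c f) x = c * dpair f x"
    "dpair f (x + y) = dpair f x + dpair f y" "dpair f (x - y) = dpair f x - dpair f y"
    "dpair f (- x) = - dpair f x" "dpair f 0 = 0" "dpair f (vsc c x) = c * dpair f x"
  by (simp_all add: dpair_def vsc_def algebra_simps sum.distrib sum_subtractf sum_negf sum_distrib_left)


lemma dp2: "dpair (2 * f) u = 2 * dpair f u" "dpair f (2 * u) = 2 * dpair f u"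
  by (simp_all add: dpair_def sum_distrib_left mult_ac)

lemma dp_ev: "dpair f (ev j) = f j" "dpair (ev j) f = f j"
proof -
  have "(\<Sum>i\<in>UNIV. f i * (if i = j then 1 else 0)) = f j" "(\<Sum>i\<in>UNIV. (if i = j then 1 else 0) * f i) = f j"
    by (simp_all add: if_distrib[where f="\<lambda>t. f _ * t"] if_distrib[where f="\<lambda>t. t * f _"] cong: if_cong)
  then show "dpair f (ev j) = f j" "dpair (ev j) f = f j" by (simp_all add: dpair_def ev_def)
qed

lemma dp_ext: "(\<And>u. dpair f u = dpair g u) \<Longrightarrow> f = g"
  by (rule ext) (metis dp_ev(1))


lemma dp_sum: "dpair f (sum g A) = (\<Sum>a\<in>A. dpair f (g a))"
proof (induction A rule: infinite_finite_induct)
  case (infinite A) then show ?case by (metis sum.infinite dp_simps(9))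
next
  case empty then show ?case by (metis sum.empty dp_simps(9))
next
  case (insert x F) then show ?case by (metis sum.insert dp_simps(6))
qed

lemma dual_char:
  fixes rho :: "('n::finite \<Rightarrow> 'k::field) \<Rightarrow> ('n \<Rightarrow> 'k) \<Rightarrow> ('n \<Rightarrow> 'k)"
  assumes lin: "lin_map vsc vsc (rho x)"
  shows "dpair (dual_rep rho x v) u = - dpair v (rho x u)"
proof -
  define w where "w = (\<lambda>j. - dpair v (rho x (ev j)))"
  have P: "\<forall>u. dpair w u = - dpair v (rho x u)"
  proof
    fix u
    have "dpair v (rho x u) = dpair v (rho x (\<Sum>j\<in>UNIV. vsc (u j) (ev j)))"
      by (subst decomp[of u]) simp
    also have "... = dpair v (\<Sum>j\<in>UNIV. vsc (u j) (rho x (ev j)))"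
      by (simp add: lm_sum[OF lin] lm_sc[OF lin])
    also have "... = (\<Sum>j\<in>UNIV. u j * dpair v (rho x (ev j)))"
      by (simp add: dp_sum dp_simps)
    also have "... = - dpair w u" by (simp add: dpair_def w_def mult.commute sum_negf)
    finally show "dpair w u = - dpair v (rho x u)" by simp
  qed
  have "\<forall>u. dpair (dual_rep rho x v) u = - dpair v (rho x u)"
    unfolding dual_rep_def
  proof (rule theI[of _ w])
    show "\<forall>u. dpair w u = - dpair v (rho x u)" by (rule P)
    fix w' assume "\<forall>u. dpair w' u = - dpair v (rho x u)"
    then show "w' = w" using P by (intro dp_ext) simp
  qed
  then show ?thesis by simp
qed


context
  fixes st ci :: "('n::finite \<Rightarrow> 'k::field_char_0) \<Rightarrow> ('n \<Rightarrow> 'k) \<Rightarrow> ('n \<Rightarrow> 'k)"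
  assumes tz: "TZPD vsc st ci"
begin

lemma bst2: "bilin_op vsc st" using tz unfolding TZPD_def zinbiel_def by blast
lemma bci2: "bilin_op vsc ci" using tz unfolding TZPD_def pre_lie_def by blast
lemma zin2: "st x (st y z) = st (st x y) z + st (st y x) z" using tz unfolding TZPD_def zinbiel_def by blast
lemma plie2: "ci (ci x y) z - ci x (ci y z) = ci (ci y x) z - ci y (ci x z)"
  using tz unfolding TZPD_def pre_lie_def by blast
lemma id1b: "ci y (st x z) + ci y (st x z) = ci (st x y + st y x) z + st x (ci y z)"
  using tz unfolding TZPD_def by blast
lemma id2b: "st (ci x y - ci y x) z + st (ci x y - ci y x) z = st x (ci y z) - st y (ci x z)"
  using tz unfolding TZPD_def by blast
lemma id3b: "ci y (st x z + st z x) - ci x (st y z + st z y) + st z (ci x y - ci y x) = 0"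
  using tz unfolding TZPD_def by blast

lemmas S2 = bo_simps[OF bst2] bo_simps[OF bci2]

lemma zinp: "st x (st y z) i = st (st x y) z i + st (st y x) z i"
  using fun_cong[OF zin2[of x y z], of i] by simp
lemma pliep: "ci (ci x y) z i - ci x (ci y z) i = ci (ci y x) z i - ci y (ci x z) i"
  using fun_cong[OF plie2[of x y z], of i] by simp

definition mm where "mm x y = st x y + st y x"
definition bk where "bk x y = ci x y - ci y x"

lemma mm_comm: "mm x y = mm y x" by (simp add: mm_def add.commute)
lemma mm_bil: "bilin_op vsc mm"
  using bst2 unfolding bilin_op_def lin_map_def mm_def by (simp add: algebra_simps vsc_def fun_eq_iff)
lemma bk_bil: "bilin_op vsc bk"
  using bci2 unfolding bilin_op_def lin_map_def bk_def by (simp add: algebra_simps vsc_def fun_eq_iff)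
lemma mm_assoc: "mm (mm x y) z = mm x (mm y z)"
proof (rule ext)
  fix i
  show "mm (mm x y) z i = mm x (mm y z) i"
    using zinp[of x y z i] zinp[of z x y i] zinp[of z y x i] zinp[of x z y i]
    by (simp add: mm_def S2)
qed
lemma bk_alt: "bk x x = 0" by (simp add: bk_def)
lemma bk_jac: "bk x (bk y z) + bk y (bk z x) + bk z (bk x y) = 0"
proof (rule ext)
  fix i
  show "(bk x (bk y z) + bk y (bk z x) + bk z (bk x y)) i = 0 i"
    using pliep[of x y z i] pliep[of y z x i] pliep[of z x y i] pliep[of x z y i] pliep[of y x z i] pliep[of z y x i]
    by (simp add: bk_def S2) algebra
qed
lemma tpA: "mm z (bk x y) + mm z (bk x y) = bk (mm z x) y + bk x (mm z y)"
  using comb[OF bst2 bci2 id1b id2b, of z x y] id3b[of y x z] unfolding mm_def bk_def by blast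

lemma rep_st: "st a (st b u) = st (mm a b) u" by (simp add: zin2 mm_def S2)
lemma rep_ci: "ci (bk a b) u = ci a (ci b u) - ci b (ci a u)"
proof -
  have "ci (ci a b) u - ci (ci b a) u = ci a (ci b u) - ci b (ci a u)"
    using plie2[of a b u] by (metis ab2)
  then show ?thesis by (simp add: bk_def S2)
qed
lemma id1c: "ci y (st x z) + ci y (st x z) = ci (mm x y) z + st x (ci y z)"
  using id1b by (simp add: mm_def)
lemma id2c: "st (bk x y) z + st (bk x y) z = st x (ci y z) - st y (ci x z)"
  using id2b by (simp add: bk_def)

definition mu where "mu x v = - dual_rep st x v"
definition MM where "MM = sd_mul mm mu"
definition LL where "LL = sd_br bk (dual_rep ci)"

lemma dmu: "dpair (mu x v) u = dpair v (st x u)"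
  by (simp add: mu_def dp_simps dual_char[OF boR[OF bst2]])
lemma dci: "dpair (dual_rep ci x v) u = - dpair v (ci x u)"
  by (rule dual_char[OF boR[OF bci2]])

lemmas SC = lm_sc[OF boL[OF bst2]] lm_sc[OF boR[OF bst2]] lm_sc[OF boL[OF bci2]] lm_sc[OF boR[OF bci2]]
  lm_sc[OF boL[OF mm_bil]] lm_sc[OF boR[OF mm_bil]] lm_sc[OF boL[OF bk_bil]] lm_sc[OF boR[OF bk_bil]]
lemmas MS = bo_simps[OF mm_bil] bo_simps[OF bk_bil]

lemma MM_bil: "bilin_op psc MM"
  unfolding bilin_op_def lin_map_def
proof (intro conjI allI)
  fix p q r :: "('n \<Rightarrow> 'k) \<times> ('n \<Rightarrow> 'k)" and c :: 'k
  show "MM p (q + r) = MM p q + MM p r"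
    by (auto simp: MM_def sd_mul_def prod_eq_iff MS intro!: dp_ext) (simp add: dp_simps dmu S2)
  show "MM (q + r) p = MM q p + MM r p"
    by (auto simp: MM_def sd_mul_def prod_eq_iff MS intro!: dp_ext) (simp add: dp_simps dmu S2)
  show "MM p (psc c q) = psc c (MM p q)"
    by (auto simp: MM_def sd_mul_def psc_def prod_eq_iff SC intro!: dp_ext) (simp add: dp_simps dmu SC algebra_simps)
  show "MM (psc c q) p = psc c (MM q p)"
    by (auto simp: MM_def sd_mul_def psc_def prod_eq_iff SC intro!: dp_ext) (simp add: dp_simps dmu SC algebra_simps)
qed

lemma LL_bil: "bilin_op psc LL"
  unfolding bilin_op_def lin_map_def
proof (intro conjI allI)
  fix p q r :: "('n \<Rightarrow> 'k) \<times> ('n \<Rightarrow> 'k)" and c :: 'k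
  show "LL p (q + r) = LL p q + LL p r"
    by (auto simp: LL_def sd_br_def prod_eq_iff MS intro!: dp_ext) (simp add: dp_simps dci S2)
  show "LL (q + r) p = LL q p + LL r p"
    by (auto simp: LL_def sd_br_def prod_eq_iff MS intro!: dp_ext) (simp add: dp_simps dci S2)
  show "LL p (psc c q) = psc c (LL p q)"
    by (auto simp: LL_def sd_br_def psc_def prod_eq_iff SC intro!: dp_ext) (simp add: dp_simps dci SC algebra_simps)
  show "LL (psc c q) p = psc c (LL q p)"
    by (auto simp: LL_def sd_br_def psc_def prod_eq_iff SC intro!: dp_ext) (simp add: dp_simps dci SC algebra_simps)
qed

lemma MM_comm: "MM p q = MM q p"
  by (simp add: MM_def sd_mul_def mm_comm add.commute)

lemma MM_assoc: "MM (MM p q) r = MM p (MM q r)"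
  by (auto simp: MM_def sd_mul_def prod_eq_iff mm_assoc intro!: dp_ext)
     (simp add: dp_simps dmu S2 rep_st mm_comm)

lemma LL_alt: "LL p p = 0"
  by (simp add: LL_def sd_br_def bk_alt zero_prod_def)

lemma LL_jac: "LL p (LL q r) + LL q (LL r p) + LL r (LL p q) = 0"
  by (auto simp: LL_def sd_br_def prod_eq_iff bk_jac intro!: dp_ext)
     (simp add: dp_simps dci S2 rep_ci)

lemma tp_sd: "MM r (LL p q) + MM r (LL p q) = LL (MM r p) q + LL p (MM r q)"
proof -
  have two: "(2::'k) \<noteq> 0" by simp
  have h1: "dpair v (ci y (st x u)) = (dpair v (ci (mm x y) u) + dpair v (st x (ci y u))) / 2" for v x y u
  proof -
    have "dpair v (ci y (st x u) + ci y (st x u)) = dpair v (ci (mm x y) u + st x (ci y u))"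
      by (simp only: id1c)
    then have "dpair v (ci y (st x u)) + dpair v (ci y (st x u)) = dpair v (ci (mm x y) u) + dpair v (st x (ci y u))"
      by (simp only: dp_simps)
    then show ?thesis by (simp add: field_simps)
  qed
  have h2: "dpair v (st (bk x y) u) = (dpair v (st x (ci y u)) - dpair v (st y (ci x u))) / 2" for v x y u
  proof -
    have "dpair v (st (bk x y) u + st (bk x y) u) = dpair v (st x (ci y u) - st y (ci x u))"
      by (simp only: id2c)
    then have "dpair v (st (bk x y) u) + dpair v (st (bk x y) u) = dpair v (st x (ci y u)) - dpair v (st y (ci x u))"
      by (simp only: dp_simps)
    then show ?thesis by (simp add: field_simps)
  qed
  show ?thesis
    by (auto simp: LL_def MM_def sd_br_def sd_mul_def prod_eq_iff tpA intro!: dp_ext)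
       (simp add: dp_simps dp2 dci dmu S2 h1 h2 field_simps)
qed

lemma Bp_bil: "bilin_form psc Bp"
  unfolding bilin_form_def lin_map_def
  by (auto simp: Bp_def psc_def dp_simps algebra_simps)

lemma Bp_skew: "skew_form Bp" by (simp add: skew_form_def Bp_def)

lemma Bp_nd: "nondeg_form (Bp :: ('n \<Rightarrow> 'k) \<times> ('n \<Rightarrow> 'k) \<Rightarrow> _ \<Rightarrow> _)"
  unfolding nondeg_form_def
proof (intro allI impI)
  fix p :: "('n \<Rightarrow> 'k) \<times> ('n \<Rightarrow> 'k)"
  assume h: "\<forall>q. Bp p q = 0"
  have "fst p j = 0" for j using h[rule_format, of "(0, ev j)"] by (simp add: Bp_def dp_simps dp_ev)
  moreover have "snd p j = 0" for j using h[rule_format, of "(ev j, 0)"] by (simp add: Bp_def dp_simps dp_ev)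
  ultimately show "p = 0" by (simp add: prod_eq_iff fun_eq_iff)
qed

lemma Bp_cc: "Bp (MM p q) r + Bp (MM q r) p + Bp (MM r p) q = 0"
  by (simp add: Bp_def MM_def sd_mul_def dp_simps dmu mm_def)

lemma Bp_sy: "Bp (LL p q) r + Bp (LL q r) p + Bp (LL r p) q = 0"
  by (simp add: Bp_def LL_def sd_br_def dp_simps dci bk_def)

lemma part2: "let m = (\<lambda>x y. st x y + st y x); br = (\<lambda>x y. ci x y - ci y x);
           M = sd_mul m (\<lambda>x v. - dual_rep st x v);
           L = sd_br br (dual_rep ci)
       in transposed_poisson psc M L \<and> connes_cocycle psc M Bp \<and> symplectic_form psc L Bp"
proof -
  have e1: "(\<lambda>x y. st x y + st y x) = mm" by (intro ext) (simp add: mm_def)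
  have e2: "(\<lambda>x y. ci x y - ci y x) = bk" by (intro ext) (simp add: bk_def)
  have e3: "(\<lambda>x v. - dual_rep st x v) = mu" by (intro ext) (simp add: mu_def)
  have "transposed_poisson psc MM LL"
    unfolding transposed_poisson_def comm_assoc_alg_def lie_alg_def
    using MM_bil MM_comm MM_assoc LL_bil LL_alt LL_jac tp_sd by blast
  moreover have "connes_cocycle psc MM Bp"
    unfolding connes_cocycle_def using Bp_bil Bp_skew Bp_cc by blast
  moreover have "symplectic_form psc LL Bp"
    unfolding symplectic_form_def using Bp_bil Bp_skew Bp_nd Bp_sy by blast
  ultimately show ?thesis unfolding Let_def e1 e2 e3 MM_def[symmetric] LL_def[symmetric] by blast
qed

end

theorem mainTheorem19:
  shows
  "(\<forall>(m :: ('n::finite \<Rightarrow> 'k::field_char_0) \<Rightarrow> ('n \<Rightarrow> 'k) \<Rightarrow> ('n \<Rightarrow> 'k)) br B.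
      transposed_poisson vsc m br \<and> bilin_form vsc B \<and> skew_form B \<and> nondeg_form B
      \<and> connes_cocycle vsc m B \<and> symplectic_form vsc br B
      \<longrightarrow> (\<exists>st ci. (\<forall>x y z. B (st x y) z = B y (m x z)) \<and> (\<forall>x y z. B (ci x y) z = - B y (br x z)))
        \<and> (\<forall>st ci. (\<forall>x y z. B (st x y) z = B y (m x z)) \<and> (\<forall>x y z. B (ci x y) z = - B y (br x z))
             \<longrightarrow> TZPD vsc st ci \<and> (\<forall>x y. st x y + st y x = m x y) \<and> (\<forall>x y. ci x y - ci y x = br x y)))
   \<and>
   (\<forall>(st :: ('n \<Rightarrow> 'k) \<Rightarrow> ('n \<Rightarrow> 'k) \<Rightarrow> ('n \<Rightarrow> 'k)) ci.
      TZPD vsc st ci \<longrightarrow>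
      (let m = (\<lambda>x y. st x y + st y x); br = (\<lambda>x y. ci x y - ci y x);
           M = sd_mul m (\<lambda>x v. - dual_rep st x v);
           L = sd_br br (dual_rep ci)
       in transposed_poisson psc M L \<and> connes_cocycle psc M Bp \<and> symplectic_form psc L Bp))"
    apply (rule conjI)
   apply (intro allI impI)
   apply (elim conjE)
   apply (rule part1; assumption)
  apply (intro allI impI)
  apply (rule part2; assumption)
  done

end
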